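(* Let $L$ be a finite distributive lattice such that $\widetilde L$ is a regular mosaic, and let $F:\bigcup_{x\in c(L)}\mathcal D_x(\mathcal J(L))\to\mathbb R$. Define $\widetilde F:\widetilde L\to\mathbb R$ by $\widetilde F(y,z):=F(1_{\eta(y)}-1_{\eta(z)})$, and let $\widetilde m:\widetilde L\to\mathbb R$ be its Möbius transform, i.e. the unique function with $\widetilde F(x,y)=\sum_{(z,t)\in\widetilde L,\,(z,t)\le(x,y)}\widetilde m(z,t)$ for all $(x,y)\in\widetilde L$. Then for every $f\in\widetilde{|L|}$, $$\overline F(f)=\sum_{(s,t)\in\widetilde L}\widetilde m(s,t)\Big[\min_{j\in\eta(s)}f^+(j)\ \wedge\ \min_{j\in\eta(t)}f^-(j)\Big],$$ where $f^+:=\max(f,0)$, $f^-:=\max(-f,0)$, $\wedge$ denotes minimum, and a minimum over the empty set is $1$.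
   Context: $L$ has least element $\bot$ and greatest element $\top$; $\mathcal J(L)$ is its set of join-irreducible elements (elements covering exactly one element) with the induced order; $\eta(y):=\{j\in\mathcal J(L): j\le y\}$. $c(L)$ is the set of complemented elements ($x$ with some $x'$, unique, such that $x\wedge x'=\bot$, $x\vee x'=\top$). $\widetilde L:=\{(x,y)\in L^2: x\wedge y=\bot\}$ with the product order. $\widetilde L$ is a regular mosaic if every connected component of the Hasse diagram of $\mathcal J(L)$ has a least element. A map $g$ on $\mathcal J(L)$ is nonincreasing if $j\le j'$ implies $g(j)\ge g(j')$. For $x\in c(L)$: $\mathcal D_x(\mathcal J(L))$ is the set of maps $\xi:\mathcal J(L)\to\{-1,0,1\}$ with $|\xi|$ nonincreasing, $\xi\ge0$ on $\eta(x)$, $\xi\le0$ on $\eta(x')$; $\mathcal C_x(\mathcal J(L))$ is the set of maps $f:\mathcal J(L)\to[-1,1]$ with $|f|$ nonincreasing, $f\ge0$ on $\eta(x)$, $f\le0$ on $\eta(x')$; and $\widetilde{|L|}:=\bigcup_{x\in c(L)}\mathcal C_x(\mathcal J(L))$. For $f\in\widetilde{|L|}$, $|f|$ can be written uniquely as $|f|=\sum_{i=0}^p\alpha_i1_{X_i}$ with $X_0\subsetneq\cdots\subsetneq X_p$ downsets of $\mathcal J(L)$, $\alpha_i>0$, $\sum_i\alpha_i=1$; the (bipolar) natural extension is $\overline F(f):=\sum_{i=0}^p\alpha_iF(1_{X_i\cap\eta(x)}-1_{X_i\cap\eta(x')})$, where $x\in c(L)$ is any element with $f\in\mathcal C_x(\mathcal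 J(L))$ (the value does not depend on this choice). *)

theory Defs
  imports Complex_Main "HOL-Library.Indicator_Function"
begin

definition covers :: "'a::order \<Rightarrow> 'a \<Rightarrow> bool" where
  "covers y x \<longleftrightarrow> x < y \<and> \<not> (\<exists>z. x < z \<and> z < y)"

definition JI :: "'a::{finite,bounded_lattice} set" where
  "JI = {j. card {x. covers j x} = 1}"

definition eta :: "'a::{finite,bounded_lattice} \<Rightarrow> 'a set" where
  "eta y = {j \<in> JI. j \<le> y}"

definition complemented :: "'a::bounded_lattice set" where
  "complemented = {x. \<exists>x'. inf x x' = bot \<and> sup x x' = top}"

definition cmpl :: "'a::bounded_lattice \<Rightarrow> 'a" where
  "cmpl x = (THE x'. inf x x' = bot \<and> sup x x' = top)"

definition Ltilde :: "('a::bounded_lattice \<times> 'a) set" where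
  "Ltilde = {(x, y). inf x y = bot}"

definition hasseJ :: "('a::{finite,bounded_lattice} \<times> 'a) set" where
  "hasseJ = {(j, k). j \<in> JI \<and> k \<in> JI \<and> j < k \<and>
                     \<not> (\<exists>l \<in> JI. j < l \<and> l < k)}"

definition componentJ :: "'a::{finite,bounded_lattice} \<Rightarrow> 'a set" where
  "componentJ j = {k \<in> JI. (j, k) \<in> (hasseJ \<union> hasseJ\<inverse>)\<^sup>*}"

definition regular_mosaic :: "'a::{finite,bounded_lattice} itself \<Rightarrow> bool" where
  "regular_mosaic _ \<longleftrightarrow>
     (\<forall>j \<in> (JI :: 'a set). \<exists>m \<in> componentJ j. \<forall>k \<in> componentJ j. m \<le> k)"

definition abs_nonincr :: "('a::{finite,bounded_lattice} \<Rightarrow> real) \<Rightarrow> bool" where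
  "abs_nonincr g \<longleftrightarrow> (\<forall>j \<in> JI. \<forall>j' \<in> JI. j \<le> j' \<longrightarrow> \<bar>g j'\<bar> \<le> \<bar>g j\<bar>)"

(* Functions on J(L) are represented as functions on 'a that vanish outside J(L). *)
definition Dx :: "'a::{finite,bounded_lattice} \<Rightarrow> ('a \<Rightarrow> real) set" where
  "Dx x = {\<xi>. (\<forall>j. j \<notin> JI \<longrightarrow> \<xi> j = 0) \<and> (\<forall>j \<in> JI. \<xi> j \<in> {-1, 0, 1})
             \<and> abs_nonincr \<xi> \<and> (\<forall>j \<in> eta x. \<xi> j \<ge> 0) \<and> (\<forall>j \<in> eta (cmpl x). \<xi> j \<le> 0)}"

definition Cx :: "'a::{finite,bounded_lattice} \<Rightarrow> ('a \<Rightarrow> real) set" where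
  "Cx x = {f. (\<forall>j. j \<notin> JI \<longrightarrow> f j = 0) \<and> (\<forall>j \<in> JI. -1 \<le> f j \<and> f j \<le> 1)
             \<and> abs_nonincr f \<and> (\<forall>j \<in> eta x. f j \<ge> 0) \<and> (\<forall>j \<in> eta (cmpl x). f j \<le> 0)}"

definition geomreal :: "('a::{finite,bounded_lattice} \<Rightarrow> real) set" where
  "geomreal = (\<Union>x \<in> complemented. Cx x)"

definition downsetJ :: "'a::{finite,bounded_lattice} set \<Rightarrow> bool" where
  "downsetJ X \<longleftrightarrow> X \<subseteq> JI \<and> (\<forall>j \<in> X. \<forall>k \<in> JI. k \<le> j \<longrightarrow> k \<in> X)"

definition level_decomp ::
  "('a::{finite,bounded_lattice} \<Rightarrow> real) \<Rightarrow> nat \<Rightarrow> (nat \<Rightarrow> 'a set) \<Rightarrow> (nat \<Rightarrow> real) \<Rightarrow> bool" where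
  "level_decomp f p X \<alpha> \<longleftrightarrow>
     (\<forall>i \<le> p. downsetJ (X i)) \<and> (\<forall>i < p. X i \<subset> X (Suc i)) \<and>
     (\<forall>i \<le> p. \<alpha> i > 0) \<and> (\<Sum>i\<le>p. \<alpha> i) = 1 \<and>
     (\<forall>j \<in> JI. \<bar>f j\<bar> = (\<Sum>i\<le>p. \<alpha> i * indicator (X i) j))"

(* bipolar natural extension (well defined by uniqueness of the decomposition and
   independence of the choice of x, as stated in the paper) *)
definition natext ::
  "(('a::{finite,bounded_lattice} \<Rightarrow> real) \<Rightarrow> real) \<Rightarrow> ('a \<Rightarrow> real) \<Rightarrow> real" where
  "natext F f = (SOME v. \<exists>x \<in> complemented. f \<in> Cx x \<and>
      (\<exists>p X \<alpha>. level_decomp f p X \<alpha> \<and>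
         v = (\<Sum>i\<le>p. \<alpha> i * F (\<lambda>j. indicator (X i \<inter> eta x) j - indicator (X i \<inter> eta (cmpl x)) j))))"

definition min1 :: "'a set \<Rightarrow> ('a \<Rightarrow> real) \<Rightarrow> real" where
  "min1 A g = (if A = {} then 1 else Min (g ` A))"

end

theory Submission
  imports Defs
begin

type_synonym 'a L = "'a::{finite,distrib_lattice,bounded_lattice}"

lemma exists_cover:
  fixes j :: "'a::{finite,distrib_lattice,bounded_lattice}"
  assumes "u < j"
  shows "\<exists>z. u \<le> z \<and> covers j z"
proof -
  have "finite {z. u \<le> z \<and> z < j}" by simp
  moreover have "{z. u \<le> z \<and> z < j} \<noteq> {}" using assms by auto
  ultimately obtain z where z: "z \<in> {z. u \<le> z \<and> z < j}"
    and mx: "\<forall>b\<in>{z. u \<le> z \<and> z < j}. z \<le> b \<longrightarrow> z = b"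
    using finite_has_maximal by blast
  have "covers j z" unfolding covers_def
    using z mx by (auto, metis dual_order.strict_implies_order order.trans order.strict_iff_not)
  with z show ?thesis by auto
qed

lemma JI_ne_bot:
  fixes j :: "'a::{finite,distrib_lattice,bounded_lattice}"
  assumes "j \<in> JI" shows "j \<noteq> bot"
proof
  assume "j = bot"
  then have "{x. covers j x} = {}" by (auto simp: covers_def)
  with assms show False by (simp add: JI_def)
qed

lemma JI_below_cover:
  fixes j :: "'a::{finite,distrib_lattice,bounded_lattice}"
  assumes "j \<in> JI"
  obtains c where "\<And>u. u < j \<Longrightarrow> u \<le> c" "c < j"
proof -
  from assms obtain c where c: "{x. covers j x} = {c}"
    by (auto simp: JI_def card_Suc_eq)
  have "\<And>u. u < j \<Longrightarrow> u \<le> c"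
  proof -
    fix u assume "u < j"
    then obtain z where "u \<le> z" "covers j z" using exists_cover by blast
    with c show "u \<le> c" by auto
  qed
  moreover have "c < j" using c by (auto simp: covers_def)
  ultimately show ?thesis using that by blast
qed

lemma JI_prime:
  fixes j :: "'a::{finite,distrib_lattice,bounded_lattice}"
  assumes "j \<in> JI" "j \<le> sup a b"
  shows "j \<le> a \<or> j \<le> b"
proof (rule ccontr)
  assume n: "\<not> (j \<le> a \<or> j \<le> b)"
  obtain c where c: "\<And>u. u < j \<Longrightarrow> u \<le> c" "c < j" using JI_below_cover assms(1) by blast
  have e: "j = sup (inf j a) (inf j b)"
    using assms(2) by (metis inf.absorb1 inf_sup_distrib1)
  have "inf j a < j" using n by (metis inf.absorb_iff1 inf.cobounded1 inf_commute order.not_eq_order_implies_strict)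
  moreover have "inf j b < j" using n by (metis inf.absorb_iff1 inf.cobounded1 inf_commute order.not_eq_order_implies_strict)
  ultimately have "sup (inf j a) (inf j b) \<le> c" using c by simp
  with e c show False by simp
qed

lemma two_covers_sup:
  fixes j :: "'a::{finite,distrib_lattice,bounded_lattice}"
  assumes "covers j c1" "covers j c2" "c1 \<noteq> c2"
  shows "sup c1 c2 = j"
proof (rule ccontr)
  assume ne: "sup c1 c2 \<noteq> j"
  have "sup c1 c2 \<le> j" using assms by (auto simp: covers_def)
  with ne have lt: "sup c1 c2 < j" by (simp add: order_less_le)
  have "\<not> c1 < sup c1 c2" using assms(1) lt unfolding covers_def by blast
  then have "c2 \<le> c1" by (metis sup.cobounded1 sup.orderE sup_commute order.not_eq_order_implies_strict)
  with assms have "c2 < c1" by simp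
  with assms(1,2) show False unfolding covers_def by blast
qed

lemma sep_JI:
  fixes y :: "'a::{finite,distrib_lattice,bounded_lattice}"
  assumes "\<not> y \<le> a"
  shows "\<exists>j\<in>JI. j \<le> y \<and> \<not> j \<le> a"
proof -
  have "finite {z. z \<le> y \<and> \<not> z \<le> a}" by simp
  moreover have "{z. z \<le> y \<and> \<not> z \<le> a} \<noteq> {}" using assms by auto
  ultimately obtain j where j: "j \<in> {z. z \<le> y \<and> \<not> z \<le> a}"
    and mn: "\<forall>b\<in>{z. z \<le> y \<and> \<not> z \<le> a}. b \<le> j \<longrightarrow> j = b"
    using finite_has_minimal by blast
  have below: "\<And>u. u < j \<Longrightarrow> u \<le> a"
    using j mn by (metis (mono_tags, lifting) mem_Collect_eq order.strict_iff_not order.trans)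
  have "j \<noteq> bot" using j by auto
  then have "bot < j" by (simp add: bot.not_eq_extremum)
  then obtain c where c: "covers j c" using exists_cover by blast
  have "{x. covers j x} = {c}"
  proof (rule ccontr)
    assume "{x. covers j x} \<noteq> {c}"
    with c obtain c2 where c2: "covers j c2" "c2 \<noteq> c" by auto
    have "sup c c2 = j" using two_covers_sup c c2 by metis
    moreover have "c \<le> a" "c2 \<le> a" using below c c2 by (auto simp: covers_def)
    ultimately show False using j by (metis mem_Collect_eq sup_least)
  qed
  then have "j \<in> JI" by (simp add: JI_def)
  with j show ?thesis by auto
qed

lemma eta_le_iff:
  fixes y :: "'a::{finite,distrib_lattice,bounded_lattice}"
  shows "eta y \<subseteq> eta a \<longleftrightarrow> y \<le> a"
  using sep_JI[of y a] by (auto simp: eta_def)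

lemma downset_rep_aux:
  fixes S :: "'a::{finite,distrib_lattice,bounded_lattice} set"
  shows "finite S \<Longrightarrow> S \<subseteq> JI \<Longrightarrow> \<exists>a. (\<forall>j\<in>S. j \<le> a) \<and> (\<forall>j\<in>JI. j \<le> a \<longrightarrow> (\<exists>k\<in>S. j \<le> k))"
proof (induction S rule: finite_induct)
  case empty
  then show ?case using JI_ne_bot by (metis bot.extremum_uniqueI empty_iff)
next
  case (insert k S)
  then obtain a where a: "\<forall>j\<in>S. j \<le> a" "\<forall>j\<in>JI. j \<le> a \<longrightarrow> (\<exists>k\<in>S. j \<le> k)" by auto
  show ?case
    apply (rule exI[of _ "sup a k"])
    using a JI_prime[of _ a k] by (auto intro: le_supI1)
qed

lemma downset_rep:
  fixes X :: "'a::{finite,distrib_lattice,bounded_lattice} set"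
  assumes "downsetJ X"
  shows "\<exists>a. eta a = X"
proof -
  from assms have "X \<subseteq> JI" by (simp add: downsetJ_def)
  then obtain a where a: "\<forall>j\<in>X. j \<le> a" "\<forall>j\<in>JI. j \<le> a \<longrightarrow> (\<exists>k\<in>X. j \<le> k)"
    using downset_rep_aux[OF finite] by blast
  have "eta a = X" using a assms unfolding eta_def downsetJ_def by auto
  then show ?thesis by blast
qed

lemma cmpl_prop:
  fixes x :: "'a::{finite,distrib_lattice,bounded_lattice}"
  assumes "x \<in> complemented"
  shows "inf x (cmpl x) = bot \<and> sup x (cmpl x) = top"
proof -
  from assms obtain y where y: "inf x y = bot" "sup x y = top" by (auto simp: complemented_def)
  have uniq: "z = y" if z: "inf x z = bot" "sup x z = top" for z
  proof -
    have "z = inf z (sup x y)" using y by simp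
    also have "\<dots> = sup (inf z x) (inf z y)" by (rule inf_sup_distrib1)
    also have "inf z x = bot" using z by (simp add: inf_commute)
    finally have 1: "z = inf z y" by simp
    have "y = inf y (sup x z)" using z by simp
    also have "\<dots> = sup (inf y x) (inf y z)" by (rule inf_sup_distrib1)
    also have "inf y x = bot" using y by (simp add: inf_commute)
    finally have "y = inf y z" by simp
    with 1 show ?thesis by (simp add: inf_commute)
  qed
  have "cmpl x = y" unfolding cmpl_def
  proof (rule the_equality)
    show "inf x y = bot \<and> sup x y = top" using y by simp
  next
    fix z assume "inf x z = bot \<and> sup x z = top"
    then show "z = y" using uniq by blast
  qed
  with y show ?thesis by simp
qed

lemma latest:
  fixes X :: "nat \<Rightarrow> 'b set"
  assumes mono: "\<And>i i'. i \<le> i' \<Longrightarrow> i' \<le> p \<Longrightarrow> X i \<subseteq> X i'"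
  shows "finite A \<Longrightarrow> A \<noteq> {} \<Longrightarrow> \<exists>j\<in>A. \<forall>i\<le>p. j \<in> X i \<longrightarrow> A \<subseteq> X i"
proof (induction A rule: finite_ne_induct)
  case (singleton x)
  then show ?case by auto
next
  case (insert k A)
  then obtain j where j: "j \<in> A" "\<forall>i\<le>p. j \<in> X i \<longrightarrow> A \<subseteq> X i" by auto
  show ?case
  proof (cases "\<forall>i\<le>p. k \<in> X i \<longrightarrow> j \<in> X i")
    case True
    then show ?thesis using j by (intro bexI[of _ k]) auto
  next
    case False
    then obtain i0 where i0: "i0 \<le> p" "k \<in> X i0" "j \<notin> X i0" by auto
    have "\<forall>i\<le>p. j \<in> X i \<longrightarrow> insert k A \<subseteq> X i"
    proof (intro allI impI)
      fix i assume i: "i \<le> p" "j \<in> X i"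
      have "\<not> i \<le> i0" using mono[of i i0] i i0 by auto
      then have "X i0 \<subseteq> X i" using mono[of i0 i] i by auto
      then show "insert k A \<subseteq> X i" using i j i0 by auto
    qed
    then show ?thesis using j(1) by blast
  qed
qed

lemma tail_min:
  fixes X :: "nat \<Rightarrow> 'b set" and \<alpha> :: "nat \<Rightarrow> real"
  assumes mono: "\<And>i i'. i \<le> i' \<Longrightarrow> i' \<le> p \<Longrightarrow> X i \<subseteq> X i'"
    and apos: "\<And>i. i \<le> p \<Longrightarrow> \<alpha> i \<ge> 0"
    and asum: "(\<Sum>i\<le>p. \<alpha> i) = 1"
    and fin: "finite A"
    and hv: "\<And>j. j \<in> A \<Longrightarrow> v j = (\<Sum>i\<le>p. \<alpha> i * indicator (X i) j)"
  shows "(\<Sum>i\<le>p. \<alpha> i * (if A \<subseteq> X i then 1 else 0)) = min1 A v"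
proof (cases "A = {}")
  case True
  then show ?thesis using asum by (simp add: min1_def)
next
  case False
  obtain j where j: "j \<in> A" "\<forall>i\<le>p. j \<in> X i \<longrightarrow> A \<subseteq> X i"
    using latest[where p=p and X=X, OF mono fin False] by blast
  have eq: "(\<Sum>i\<le>p. \<alpha> i * (if A \<subseteq> X i then 1 else 0)) = v j"
    unfolding hv[OF j(1)] by (rule sum.cong) (use j in \<open>auto simp: indicator_def\<close>)
  have le: "v j \<le> v j'" if "j' \<in> A" for j'
  proof -
    have "v j = (\<Sum>i\<le>p. \<alpha> i * (if A \<subseteq> X i then 1 else 0))" using eq by simp
    also have "\<dots> \<le> (\<Sum>i\<le>p. \<alpha> i * indicator (X i) j')"
      by (rule sum_mono) (use apos that in \<open>auto simp: indicator_def\<close>)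
    finally show ?thesis using hv[OF that] by simp
  qed
  have "Min (v ` A) = v j"
    by (rule Min_eqI) (use fin j le in auto)
  then show ?thesis using eq False by (simp add: min1_def)
qed

lemma min1_Un:
  fixes v :: "'b \<Rightarrow> real"
  assumes "finite A" "finite B" "\<And>j. j \<in> A \<union> B \<Longrightarrow> v j \<le> 1"
  shows "min1 (A \<union> B) v = min (min1 A v) (min1 B v)"
proof -
  have m1: "min1 C v \<le> 1" if "C \<subseteq> A \<union> B" for C
  proof (cases "C = {}")
    case False
    then obtain c where "c \<in> C" by auto
    moreover have "finite C" using that assms finite_subset by blast
    ultimately have "Min (v ` C) \<le> v c" by simp
    moreover have "v c \<le> 1" using assms(3) that \<open>c \<in> C\<close> by auto
    ultimately show ?thesis using False by (simp add: min1_def)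
  qed (simp add: min1_def)
  show ?thesis
  proof (cases "A = {}")
    case True then show ?thesis using m1[of B] by (auto simp: min1_def)
  next
    case fA: False
    show ?thesis
    proof (cases "B = {}")
      case True then show ?thesis using m1[of A] by (auto simp: min1_def)
    next
      case False
      then show ?thesis using fA assms by (simp add: min1_def image_Un Min_Un)
    qed
  qed
qed

lemma min1_cong:
  "(\<And>j. j \<in> A \<Longrightarrow> g j = v j) \<Longrightarrow> min1 A g = min1 A v"
  unfolding min1_def by (simp cong: image_cong)

lemma min1_zero:
  fixes g :: "'b \<Rightarrow> real"
  assumes "finite A" "\<And>j. j \<in> A \<Longrightarrow> g j \<ge> 0" "j0 \<in> A" "g j0 = 0"
  shows "min1 A g = 0"
proof -
  have "Min (g ` A) \<le> 0" using assms by (metis Min_le finite_imageI image_eqI)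
  moreover have "Min (g ` A) \<ge> 0" using assms by (subst Min_ge_iff) auto
  ultimately have "Min (g ` A) = 0" by linarith
  moreover have "A \<noteq> {}" using assms by auto
  ultimately show ?thesis by (simp add: min1_def)
qed

lemma min1_nonneg:
  fixes g :: "'b \<Rightarrow> real"
  assumes "finite A" "\<And>j. j \<in> A \<Longrightarrow> g j \<ge> 0"
  shows "min1 A g \<ge> 0"
  using assms by (auto simp: min1_def)


lemma tele_tail:
  fixes c :: "nat \<Rightarrow> real"
  assumes "m \<le> Suc p"
  shows "(\<Sum>i\<le>p. (if m \<le> i then c i - c (Suc i) else 0)) = c m - c (Suc p)"
proof -
  define d where "d i = c (max m i)" for i
  have "(\<Sum>i\<le>p. (if m \<le> i then c i - c (Suc i) else 0)) = (\<Sum>i\<le>p. d i - d (Suc i))"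
    by (rule sum.cong) (auto simp: d_def max_def intro!: arg_cong[where f=c])
  also have "\<dots> = d 0 - d (Suc p)" by (rule sum_telescope)
  also have "\<dots> = c m - c (Suc p)" using assms by (simp add: d_def max_def)
  finally show ?thesis .
qed

lemma decomp_exists:
  fixes f :: "'a::{finite,distrib_lattice,bounded_lattice} \<Rightarrow> real"
  assumes anti: "abs_nonincr f" and rng: "\<And>j. j \<in> JI \<Longrightarrow> \<bar>f j\<bar> \<le> 1"
  shows "\<exists>p X \<alpha>. level_decomp f p X \<alpha>"
proof -
  define g where "g j = \<bar>f j\<bar>" for j
  define T where "T = insert 0 (insert 1 (g ` JI))"
  define ts where "ts = sorted_list_of_set T"
  have finT: "finite T" by (simp add: T_def)
  have setts: "set ts = T" using finT by (simp add: ts_def)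
  have lents: "length ts = card T" by (simp add: ts_def)
  have sts: "sorted_wrt (<) ts" by (simp add: ts_def)
  have Trng: "\<And>t. t \<in> T \<Longrightarrow> 0 \<le> t \<and> t \<le> 1" using rng by (auto simp: T_def g_def)
  have "card T \<ge> 2"
  proof -
    have "{0, 1} \<subseteq> T" by (auto simp: T_def)
    from card_mono[OF finT this] show ?thesis by simp
  qed
  define r where "r = card T - 1"
  have r1: "r \<ge> 1" and lr: "length ts = Suc r" using \<open>card T \<ge> 2\<close> lents by (auto simp: r_def)
  define c where "c k = ts ! (r - k)" for k
  have cdec: "c k' < c k" if "k < k'" "k' \<le> r" for k k'
    unfolding c_def using sorted_wrt_nth_less[OF sts, of "r - k'" "r - k"] that lr by auto
  have cT: "c k \<in> T" if "k \<le> r" for k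
    unfolding c_def using that lr setts by (metis less_Suc_eq_le diff_le_self le_trans nth_mem)
  have Tc: "\<exists>k\<le>r. t = c k" if "t \<in> T" for t
  proof -
    have "t \<in> set ts" using that setts by simp
    then obtain i where i: "i < length ts" "t = ts ! i" by (auto simp: in_set_conv_nth)
    then have "c (r - i) = t" using lr by (simp add: c_def)
    then show ?thesis by (metis diff_le_self)
  qed
  have c0: "c 0 = 1"
  proof -
    obtain k where k: "k \<le> r" "1 = c k" using Tc[of 1] by (auto simp: T_def)
    show ?thesis
    proof (cases "k = 0")
      case False
      then have "c k < c 0" using cdec[of 0 k] k False by simp
      moreover have "c 0 \<le> 1" using Trng cT by auto
      ultimately show ?thesis using k by auto
    qed (use k in auto)
  qed
  have cr: "c r = 0"
  proof -
    obtain k where k: "k \<le> r" "0 = c k" using Tc[of 0] by (auto simp: T_def)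
    show ?thesis
    proof (cases "k = r")
      case False
      then have "c r < c k" using cdec[of k r] k False by simp
      moreover have "0 \<le> c r" using Trng cT by auto
      ultimately show ?thesis using k by auto
    qed (use k in auto)
  qed
  have cle: "c i \<le> c m \<longleftrightarrow> m \<le> i" if "i \<le> r" "m \<le> r" for i m
    using cdec[of i m] cdec[of m i] that by (cases i m rule: linorder_cases) auto
  define p where "p = r - 1"
  have Sp: "Suc p = r" using r1 by (simp add: p_def)
  define X where "X i = {j \<in> JI. c i \<le> g j}" for i
  define \<alpha> where "\<alpha> i = c i - c (Suc i)" for i
  have "level_decomp f p X \<alpha>"
    unfolding level_decomp_def
  proof (intro conjI allI impI ballI)
    fix i assume "i \<le> p"
    show "downsetJ (X i)" unfolding downsetJ_def X_def using anti
      by (auto simp: abs_nonincr_def g_def intro: order.trans)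
  next
    fix i assume i: "i < p"
    have sub: "X i \<subseteq> X (Suc i)" using cdec[of i "Suc i"] i Sp by (auto simp: X_def)
    have "c (Suc i) \<in> T" using cT i Sp by simp
    moreover have "c (Suc i) \<noteq> 0" using cdec[of "Suc i" r] i Sp cr by auto
    moreover have "c (Suc i) \<noteq> 1" using cdec[of 0 "Suc i"] i Sp c0 by auto
    ultimately obtain j where j: "j \<in> JI" "g j = c (Suc i)" by (auto simp: T_def)
    have "j \<in> X (Suc i)" "j \<notin> X i" using j cdec[of i "Suc i"] i Sp by (auto simp: X_def)
    with sub show "X i \<subset> X (Suc i)" by blast
  next
    fix i assume "i \<le> p"
    then show "\<alpha> i > 0" using cdec[of i "Suc i"] Sp by (simp add: \<alpha>_def)
  next
    show "(\<Sum>i\<le>p. \<alpha> i) = 1" unfolding \<alpha>_def sum_telescope using Sp c0 cr by simp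
  next
    fix j :: 'a assume j: "j \<in> JI"
    then have "g j \<in> T" by (simp add: T_def)
    then obtain m where m: "m \<le> r" "g j = c m" using Tc by blast
    have "(\<Sum>i\<le>p. \<alpha> i * indicator (X i) j) = (\<Sum>i\<le>p. (if m \<le> i then c i - c (Suc i) else 0))"
      by (rule sum.cong) (use j m cle Sp in \<open>auto simp: X_def \<alpha>_def indicator_def\<close>)
    also have "\<dots> = c m - c (Suc p)" using tele_tail m Sp by simp
    finally show "\<bar>f j\<bar> = (\<Sum>i\<le>p. \<alpha> i * indicator (X i) j)" using m Sp cr by (simp add: g_def)
  qed
  then show ?thesis by blast
qed


lemma chain_mono:
  fixes X :: "nat \<Rightarrow> 'b set"
  assumes "\<forall>i<p. X i \<subset> X (Suc i)"
  shows "i \<le> i' \<Longrightarrow> i' \<le> p \<Longrightarrow> X i \<subseteq> X i'"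
proof (induction i')
  case 0 then show ?case by simp
next
  case (Suc n)
  show ?case
  proof (cases "i = Suc n")
    case False
    then have "X i \<subseteq> X n" using Suc by simp
    moreover have "X n \<subset> X (Suc n)" using assms Suc by simp
    ultimately show ?thesis by blast
  qed simp
qed

lemma downset_eta: "downsetJ (eta (y::'a::{finite,distrib_lattice,bounded_lattice}))"
  unfolding downsetJ_def eta_def by (auto intro: order.trans)

lemma downset_Int: "downsetJ A \<Longrightarrow> downsetJ B \<Longrightarrow> downsetJ (A \<inter> B)"
  unfolding downsetJ_def by blast

lemma key:
  fixes F :: "(('a::{finite,distrib_lattice,bounded_lattice}) \<Rightarrow> real) \<Rightarrow> real"
    and m :: "'a \<times> 'a \<Rightarrow> real"
    and f :: "'a \<Rightarrow> real"
  assumes mob: "\<forall>(x, y) \<in> (Ltilde :: ('a \<times> 'a) set).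
               F (\<lambda>j. indicator (eta x) j - indicator (eta y) j)
                 = (\<Sum>(z, t) \<in> {(z, t) \<in> Ltilde. z \<le> x \<and> t \<le> y}. m (z, t))"
    and hx: "x \<in> complemented" and hfx: "f \<in> Cx x" and ld: "level_decomp f p X \<alpha>"
  shows "(\<Sum>i\<le>p. \<alpha> i * F (\<lambda>j. indicator (X i \<inter> eta x) j - indicator (X i \<inter> eta (cmpl x)) j)) =
    (\<Sum>(s, t) \<in> Ltilde. m (s, t) *
        min (min1 (eta s) (\<lambda>j. max (f j) 0)) (min1 (eta t) (\<lambda>j. max (- f j) 0)))"
proof -
  define x' where "x' = cmpl x"
  have cx: "inf x x' = bot" "sup x x' = top" using cmpl_prop[OF hx] by (auto simp: x'_def)
  have dX: "\<And>i. i \<le> p \<Longrightarrow> downsetJ (X i)" and strict: "\<forall>i<p. X i \<subset> X (Suc i)"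
    and apos: "\<And>i. i \<le> p \<Longrightarrow> \<alpha> i > 0" and asum: "(\<Sum>i\<le>p. \<alpha> i) = 1"
    and hv: "\<And>j. j \<in> JI \<Longrightarrow> \<bar>f j\<bar> = (\<Sum>i\<le>p. \<alpha> i * indicator (X i) j)"
    using ld unfolding level_decomp_def by auto
  have mono: "\<And>i i'. i \<le> i' \<Longrightarrow> i' \<le> p \<Longrightarrow> X i \<subseteq> X i'"
    using chain_mono[OF strict] by blast
  have fpos: "\<And>j. j \<in> eta x \<Longrightarrow> f j \<ge> 0" and fneg: "\<And>j. j \<in> eta x' \<Longrightarrow> f j \<le> 0"
    and fb: "\<And>j. j \<in> JI \<Longrightarrow> \<bar>f j\<bar> \<le> 1"
    using hfx unfolding Cx_def x'_def by auto
  have "\<forall>i. \<exists>a. i \<le> p \<longrightarrow> eta a = X i \<inter> eta x"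
    using downset_rep downset_Int dX downset_eta by blast
  then obtain a where a: "\<And>i. i \<le> p \<Longrightarrow> eta (a i) = X i \<inter> eta x" using choice by metis
  have "\<forall>i. \<exists>b. i \<le> p \<longrightarrow> eta b = X i \<inter> eta x'"
    using downset_rep downset_Int dX downset_eta by blast
  then obtain b where b: "\<And>i. i \<le> p \<Longrightarrow> eta (b i) = X i \<inter> eta x'" using choice by metis
  have ax: "a i \<le> x" if "i \<le> p" for i using a[OF that] eta_le_iff[of "a i" x] by auto
  have bx: "b i \<le> x'" if "i \<le> p" for i using b[OF that] eta_le_iff[of "b i" x'] by auto
  have Fi: "F (\<lambda>j. indicator (X i \<inter> eta x) j - indicator (X i \<inter> eta x') j) =
     (\<Sum>(s, t) \<in> Ltilde. m (s, t) * (if s \<le> a i \<and> t \<le> b i then 1 else 0))" if i: "i \<le> p" for i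
  proof -
    have "inf (a i) (b i) \<le> inf x x'" using ax[OF i] bx[OF i] by (rule inf_mono)
    then have "(a i, b i) \<in> Ltilde" using cx by (simp add: Ltilde_def bot_unique)
    then have "F (\<lambda>j. indicator (eta (a i)) j - indicator (eta (b i)) j)
       = (\<Sum>(z, t) \<in> {(z, t) \<in> Ltilde. z \<le> a i \<and> t \<le> b i}. m (z, t))" using mob by auto
    also have "{(z, t) \<in> Ltilde. z \<le> a i \<and> t \<le> b i} = {st \<in> Ltilde. fst st \<le> a i \<and> snd st \<le> b i}"
      by auto
    also have "(\<Sum>(z, t) \<in> {st \<in> Ltilde. fst st \<le> a i \<and> snd st \<le> b i}. m (z, t))
       = (\<Sum>st \<in> Ltilde. if fst st \<le> a i \<and> snd st \<le> b i then m st else 0)"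
      by (subst sum.inter_filter) (auto intro!: sum.cong split: prod.splits)
    also have "\<dots> = (\<Sum>(s, t) \<in> Ltilde. m (s, t) * (if s \<le> a i \<and> t \<le> b i then 1 else 0))"
      by (rule sum.cong) auto
    finally show ?thesis using a[OF i] b[OF i] by simp
  qed
  have pt: "(\<Sum>i\<le>p. \<alpha> i * (if s \<le> a i \<and> t \<le> b i then 1 else 0)) =
      min (min1 (eta s) (\<lambda>j. max (f j) 0)) (min1 (eta t) (\<lambda>j. max (- f j) 0))" for s t
  proof (cases "s \<le> x \<and> t \<le> x'")
    case True
    have w: "(s \<le> a i \<and> t \<le> b i) \<longleftrightarrow> eta s \<union> eta t \<subseteq> X i" if i: "i \<le> p" for i
    proof -
      have "eta s \<subseteq> eta x" "eta t \<subseteq> eta x'" using True eta_le_iff by blast+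
      then show ?thesis using eta_le_iff[of s "a i"] eta_le_iff[of t "b i"] a[OF i] b[OF i] by blast
    qed
    have "(\<Sum>i\<le>p. \<alpha> i * (if s \<le> a i \<and> t \<le> b i then 1 else 0)) =
        (\<Sum>i\<le>p. \<alpha> i * (if eta s \<union> eta t \<subseteq> X i then 1 else 0))"
      by (rule sum.cong) (use w in auto)
    also have "\<dots> = min1 (eta s \<union> eta t) (\<lambda>j. \<bar>f j\<bar>)"
      by (rule tail_min[OF mono _ asum]) (use apos hv in \<open>auto simp: eta_def less_imp_le\<close>)
    also have "\<dots> = min (min1 (eta s) (\<lambda>j. \<bar>f j\<bar>)) (min1 (eta t) (\<lambda>j. \<bar>f j\<bar>))"
      by (rule min1_Un) (use fb in \<open>auto simp: eta_def\<close>)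
    also have "min1 (eta s) (\<lambda>j. \<bar>f j\<bar>) = min1 (eta s) (\<lambda>j. max (f j) 0)"
    proof (rule min1_cong)
      fix j assume "j \<in> eta s"
      then have "j \<in> eta x" using True eta_le_iff by blast
      then show "\<bar>f j\<bar> = max (f j) 0" using fpos by auto
    qed
    also have "min1 (eta t) (\<lambda>j. \<bar>f j\<bar>) = min1 (eta t) (\<lambda>j. max (- f j) 0)"
    proof (rule min1_cong)
      fix j assume "j \<in> eta t"
      then have "j \<in> eta x'" using True eta_le_iff by blast
      then show "\<bar>f j\<bar> = max (- f j) 0" using fneg by auto
    qed
    finally show ?thesis .
  next
    case False
    have "(\<Sum>i\<le>p. \<alpha> i * (if s \<le> a i \<and> t \<le> b i then 1 else 0)) = 0"
    proof (rule sum.neutral, intro ballI)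
      fix i assume "i \<in> {..p}"
      then have "a i \<le> x" "b i \<le> x'" using ax bx by auto
      then have "\<not> (s \<le> a i \<and> t \<le> b i)" using False order.trans by blast
      then show "\<alpha> i * (if s \<le> a i \<and> t \<le> b i then 1 else 0) = 0" by auto
    qed
    moreover have n1: "min1 (eta s) (\<lambda>j. max (f j) 0) \<ge> 0" by (rule min1_nonneg) auto
    moreover have n2: "min1 (eta t) (\<lambda>j. max (- f j) 0) \<ge> 0" by (rule min1_nonneg) auto
    moreover have "min1 (eta s) (\<lambda>j. max (f j) 0) = 0 \<or> min1 (eta t) (\<lambda>j. max (- f j) 0) = 0"
    proof (cases "s \<le> x")
      case True
      with False have "\<not> t \<le> x'" by blast
      then obtain j where j: "j \<in> JI" "j \<le> t" "\<not> j \<le> x'" using sep_JI by blast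
      have "j \<le> sup x x'" using cx by simp
      then have "j \<le> x" using JI_prime[OF j(1)] j by blast
      then have "f j \<ge> 0" using fpos j by (auto simp: eta_def)
      then have "min1 (eta t) (\<lambda>j. max (- f j) 0) = 0"
        by (intro min1_zero[of _ _ j]) (use j in \<open>auto simp: eta_def\<close>)
      then show ?thesis by blast
    next
      case False
      then obtain j where j: "j \<in> JI" "j \<le> s" "\<not> j \<le> x" using sep_JI by blast
      have "j \<le> sup x x'" using cx by simp
      then have "j \<le> x'" using JI_prime[OF j(1)] j by blast
      then have "f j \<le> 0" using fneg j by (auto simp: eta_def)
      then have "min1 (eta s) (\<lambda>j. max (f j) 0) = 0"
        by (intro min1_zero[of _ _ j]) (use j in \<open>auto simp: eta_def\<close>)
      then show ?thesis by blast
    qed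
    ultimately show ?thesis by linarith
  qed
  have "(\<Sum>i\<le>p. \<alpha> i * F (\<lambda>j. indicator (X i \<inter> eta x) j - indicator (X i \<inter> eta x') j))
      = (\<Sum>i\<le>p. \<alpha> i * (\<Sum>(s, t) \<in> Ltilde. m (s, t) * (if s \<le> a i \<and> t \<le> b i then 1 else 0)))"
    by (rule sum.cong) (simp_all add: Fi)
  also have "\<dots> = (\<Sum>i\<le>p. (\<Sum>(s, t) \<in> Ltilde. \<alpha> i * (m (s, t) * (if s \<le> a i \<and> t \<le> b i then 1 else 0))))"
    by (simp add: sum_distrib_left split_def)
  also have "\<dots> = (\<Sum>(s, t) \<in> Ltilde. (\<Sum>i\<le>p. \<alpha> i * (m (s, t) * (if s \<le> a i \<and> t \<le> b i then 1 else 0))))"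
    by (subst sum.swap) (auto intro!: sum.cong split: prod.splits)
  also have "\<dots> = (\<Sum>(s, t) \<in> Ltilde. m (s, t) * (\<Sum>i\<le>p. \<alpha> i * (if s \<le> a i \<and> t \<le> b i then 1 else 0)))"
    by (simp add: sum_distrib_left split_def mult_ac)
  also have "\<dots> = (\<Sum>(s, t) \<in> Ltilde. m (s, t) *
        min (min1 (eta s) (\<lambda>j. max (f j) 0)) (min1 (eta t) (\<lambda>j. max (- f j) 0)))"
    by (simp add: pt)
  finally show ?thesis by (simp add: x'_def)
qed

theorem mainTheorem9:
  fixes F :: "(('a::{finite,distrib_lattice,bounded_lattice}) \<Rightarrow> real) \<Rightarrow> real"
    and m :: "'a \<times> 'a \<Rightarrow> real"
    and f :: "'a \<Rightarrow> real"
  assumes reg: "regular_mosaic TYPE('a)"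
    and mob: "\<forall>(x, y) \<in> (Ltilde :: ('a \<times> 'a) set).
               F (\<lambda>j. indicator (eta x) j - indicator (eta y) j)
                 = (\<Sum>(z, t) \<in> {(z, t) \<in> Ltilde. z \<le> x \<and> t \<le> y}. m (z, t))"
    and hf: "f \<in> geomreal"
  shows "natext F f =
    (\<Sum>(s, t) \<in> Ltilde. m (s, t) *
        min (min1 (eta s) (\<lambda>j. max (f j) 0)) (min1 (eta t) (\<lambda>j. max (- f j) 0)))"
proof -
  from hf obtain x0 where x0: "x0 \<in> complemented" "f \<in> Cx x0" by (auto simp: geomreal_def)
  have "abs_nonincr f" "\<And>j. j \<in> JI \<Longrightarrow> \<bar>f j\<bar> \<le> 1" using x0(2) by (auto simp: Cx_def)
  then obtain p0 X0 \<alpha>0 where d0: "level_decomp f p0 X0 \<alpha>0" using decomp_exists by blast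
  define P where "P v \<longleftrightarrow> (\<exists>x \<in> complemented. f \<in> Cx x \<and>
      (\<exists>p X \<alpha>. level_decomp f p X \<alpha> \<and>
         v = (\<Sum>i\<le>p. \<alpha> i * F (\<lambda>j. indicator (X i \<inter> eta x) j - indicator (X i \<inter> eta (cmpl x)) j))))" for v
  have "\<exists>v. P v" unfolding P_def using x0 d0 by blast
  then have "P (SOME v. P v)" by (rule someI_ex)
  moreover have "natext F f = (SOME v. P v)" unfolding natext_def P_def by simp
  ultimately have "P (natext F f)" by simp
  then obtain x p X \<alpha> where "x \<in> complemented" "f \<in> Cx x" "level_decomp f p X \<alpha>"
    "natext F f = (\<Sum>i\<le>p. \<alpha> i * F (\<lambda>j. indicator (X i \<inter> eta x) j - indicator (X i \<inter> eta (cmpl x)) j))"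
    unfolding P_def by blast
  then show ?thesis using key[OF mob] by simp
qed

end
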